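(* Let $\nu\in\mathbb C$, let $I\subset\mathbb R$ be an open interval, and let $a:I\to\mathbb C$ be twice differentiable, nowhere zero, and satisfy $$4a^3\ddot a=(3a^4+2ta^2-\nu)(a^4+2ta^2+\nu).$$ Let $\epsilon\in\{+1,-1\}$ and put $Y=\frac{\nu}{2a^2}-\frac{a^2}{2}-t-\epsilon\frac{\dot a}{a}$. If $y:I\to\mathbb C$ is twice differentiable, nowhere zero, with $y^2=Y$, then $$2y\dot y=-\epsilon\big(\nu+\epsilon-2a^2y^2-y^4-2ty^2\big),$$ and $y$ satisfies the same equation with $\nu$ replaced by $\nu+\epsilon$: $$4y^3\ddot y=(3y^4+2ty^2-(\nu+\epsilon))(y^4+2ty^2+\nu+\epsilon).$$
   Context: Dots denote $d/dt$. *)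

theory Defs
  imports "HOL-Analysis.Analysis"
begin

end

theory Submission imports Defs begin
lemma alg1:
  fixes A B C u X T \<nu> \<epsilon> :: complex
  assumes "A \<noteq> 0" "4*A^3*C = (3*A^4 + 2*T*A^2 - \<nu>)*(A^4 + 2*T*A^2 + \<nu>)"
    "2*A^2*u^2 = \<nu> - A^4 - 2*T*A^2 - 2*\<epsilon>*A*B" "\<epsilon>^2 = 1"
    "4*A^4*X = -4*\<nu>*A*B - 4*A^5*B - 4*A^4 - \<epsilon>*(4*A^3*C - 4*A^2*B^2)"
  shows "X = - \<epsilon> * (\<nu> + \<epsilon> - 2 * A^2 * u^2 - u^4 - 2 * T * u^2)"
proof -
  have "4*A^4*(X - (- \<epsilon> * (\<nu> + \<epsilon> - 2 * A^2 * u^2 - u^4 - 2 * T * u^2))) = 0"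
    using assms(2-5) by algebra
  then show ?thesis using assms(1) by (simp add: eq_neg_iff_add_eq_0)
qed
lemma alg2:
  fixes A B u yp ypp T \<nu> \<epsilon> :: complex
  assumes "u \<noteq> 0" 
    "2*A^2*u^2 = \<nu> - A^4 - 2*T*A^2 - 2*\<epsilon>*A*B" "\<epsilon> = 1 \<or> \<epsilon> = -1"
    "2*u*yp = - \<epsilon> * (\<nu> + \<epsilon> - 2 * A^2 * u^2 - u^4 - 2 * T * u^2)"
    "2*yp*yp + 2*u*ypp = - \<epsilon> * (- 2*(2*A*B*u^2 + A^2*(2*u*yp)) - 4*u^3*yp - 2*u^2 - 2*T*(2*u*yp))"
  shows "4*u^3*ypp = (3*u^4 + 2*T*u^2 - (\<nu> + \<epsilon>)) * (u^4 + 2*T*u^2 + (\<nu> + \<epsilon>))"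
proof -
  define S where "S = 2*u*yp"
  have e2: "\<epsilon>*\<epsilon> = 1" using assms(3) by auto
  have h1: "4*u^3*ypp = 2*u^2*(2*yp*yp + 2*u*ypp) - S^2" unfolding S_def by algebra
  have h2: "2*yp*yp + 2*u*ypp = 4*(\<epsilon>*A*B)*u^2 + \<epsilon>*(2*A^2*S + 2*u^2*S + 2*u^2 + 2*T*S)"
    unfolding assms(5) S_def by algebra
  have h3: "4*(\<epsilon>*A*B)*u^2 = 2*u^2*(\<nu> - A^4 - 2*T*A^2 - 2*A^2*u^2)"
    using assms(2) by algebra
  have "4*u^3*ypp = 2*u^2*(2*u^2*(\<nu> - A^4 - 2*T*A^2 - 2*A^2*u^2) + \<epsilon>*(2*A^2*S + 2*u^2*S + 2*u^2 + 2*T*S)) - S^2"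
    using h1 h2 h3 by simp
  also have "\<dots> = (3*u^4 + 2*T*u^2 - (\<nu> + \<epsilon>)) * (u^4 + 2*T*u^2 + (\<nu> + \<epsilon>))"
    using e2 unfolding S_def assms(4) by algebra
  finally show ?thesis .
qed

lemma hvd_inverse:
  fixes f :: "real \<Rightarrow> complex"
  assumes "(f has_vector_derivative f') (at x within S)" "f x \<noteq> 0"
  shows "((\<lambda>x. inverse (f x)) has_vector_derivative (- (inverse (f x) * f' * inverse (f x)))) (at x within S)"
proof -
  have "((\<lambda>x. inverse (f x)) has_derivative (\<lambda>h. - (inverse (f x) * (h *\<^sub>R f') * inverse (f x)))) (at x within S)"
    using Deriv.has_derivative_inverse[OF assms(2) assms(1)[unfolded has_vector_derivative_def]] .
  moreover have "(\<lambda>h. - (inverse (f x) * (h *\<^sub>R f') * inverse (f x))) = (\<lambda>h. h *\<^sub>R (- (inverse (f x) * f' * inverse (f x))))"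
    by (auto simp: scaleR_conv_of_real)
  ultimately show ?thesis unfolding has_vector_derivative_def by simp
qed

theorem mainTheorem13:
  fixes \<nu> \<epsilon> :: complex and I :: "real set"
    and a a' a'' y y' y'' :: "real \<Rightarrow> complex"
  assumes I_open: "open I" and I_int: "is_interval I"
    and da: "\<forall>t\<in>I. (a has_vector_derivative a' t) (at t)"
    and dda: "\<forall>t\<in>I. (a' has_vector_derivative a'' t) (at t)"
    and a_nz: "\<forall>t\<in>I. a t \<noteq> 0"
    and a_eq: "\<forall>t\<in>I. 4 * (a t)^3 * a'' t =
        (3 * (a t)^4 + 2 * of_real t * (a t)^2 - \<nu>) * ((a t)^4 + 2 * of_real t * (a t)^2 + \<nu>)"
    and eps: "\<epsilon> \<in> {1, -1}"
    and dy: "\<forall>t\<in>I. (y has_vector_derivative y' t) (at t)"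
    and ddy: "\<forall>t\<in>I. (y' has_vector_derivative y'' t) (at t)"
    and y_nz: "\<forall>t\<in>I. y t \<noteq> 0"
    and y_sq: "\<forall>t\<in>I. (y t)^2 = \<nu> / (2 * (a t)^2) - (a t)^2 / 2 - of_real t - \<epsilon> * a' t / a t"
  shows "\<forall>t\<in>I. 2 * y t * y' t = - \<epsilon> * (\<nu> + \<epsilon> - 2 * (a t)^2 * (y t)^2 - (y t)^4 - 2 * of_real t * (y t)^2)
           \<and> 4 * (y t)^3 * y'' t =
             (3 * (y t)^4 + 2 * of_real t * (y t)^2 - (\<nu> + \<epsilon>)) * ((y t)^4 + 2 * of_real t * (y t)^2 + (\<nu> + \<epsilon>))"
  proof -
  have e2: "\<epsilon>^2 = 1" and e12: "\<epsilon> = 1 \<or> \<epsilon> = -1" using eps by auto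
  define ia where "ia = (\<lambda>s. inverse (a s))"
  define Yf where "Yf = (\<lambda>s. \<nu>*(ia s*ia s)/2 - a s*a s/2 - of_real s - \<epsilon>*(a' s*ia s))"
  have P1: "2 * y t * y' t = - \<epsilon> * (\<nu> + \<epsilon> - 2 * (a t)^2 * (y t)^2 - (y t)^4 - 2 * of_real t * (y t)^2)"
     and R: "2*(a t)^2*(y t)^2 = \<nu> - (a t)^4 - 2* of_real t*(a t)^2 - 2*\<epsilon>*(a t)*(a' t)"
    if t: "t \<in> I" for t
  proof -
    have anz: "a t \<noteq> 0" using a_nz t by auto
    have Yeq: "y s * y s = Yf s" if "s \<in> I" for s
      using y_sq[rule_format, OF that] a_nz[rule_format, OF that]
      unfolding Yf_def ia_def by (simp add: power2_eq_square field_simps)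
    define dI where "dI = - (inverse (a t) * a' t * inverse (a t))"
    define D where "D = \<nu>*(ia t*dI + dI*ia t)/2 - (a t*a' t + a' t*a t)/2 - 1 - \<epsilon>*(a' t*dI + a'' t*ia t)"
    have dinv: "(ia has_vector_derivative dI) (at t)"
      unfolding dI_def ia_def using hvd_inverse[OF da[rule_format, OF t] anz] .
    have dY: "(Yf has_vector_derivative D) (at t)"
      unfolding Yf_def D_def
      apply (rule has_vector_derivative_eq_rhs)
       apply (rule derivative_intros dinv da[rule_format, OF t] dda[rule_format, OF t] DERIV_ident)+
      by (simp add: algebra_simps)
    have dyy: "((\<lambda>s. y s * y s) has_vector_derivative (y t * y' t + y' t * y t)) (at t)"
      apply (rule has_vector_derivative_eq_rhs)
       apply (rule derivative_intros dy[rule_format, OF t])+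
      by (simp add: algebra_simps)
    have dY2: "((\<lambda>s. y s * y s) has_vector_derivative D) (at t)"
      by (rule has_vector_derivative_transform_within_open[OF dY I_open t]) (simp add: Yeq)
    have X: "2 * y t * y' t = D" using vector_derivative_unique_at[OF dyy dY2] by (simp add: algebra_simps)
    show R: "2*(a t)^2*(y t)^2 = \<nu> - (a t)^4 - 2* of_real t*(a t)^2 - 2*\<epsilon>*(a t)*(a' t)"
    proof -
      have "2*(a t)^2*(y t)^2 = 2*(a t)^2*(\<nu> / (2 * (a t)^2) - (a t)^2 / 2 - of_real t - \<epsilon> * a' t / a t)"
        using y_sq[rule_format, OF t] by simp
      also have "\<dots> = \<nu> - (a t)^4 - 2 * of_real t*(a t)^2 - 2*\<epsilon>*(a t)*(a' t)"
        using anz by (simp add: field_simps power2_eq_square power4_eq_xxxx)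
      finally show ?thesis .
    qed
    have X4: "4*(a t)^4*(2 * y t * y' t) = -4*\<nu>*(a t)*(a' t) - 4*(a t)^5*(a' t) - 4*(a t)^4 - \<epsilon>*(4*(a t)^3*(a'' t) - 4*(a t)^2*(a' t)^2)"
      unfolding X D_def dI_def ia_def using anz by (simp add: field_simps eval_nat_numeral)
    show "2 * y t * y' t = - \<epsilon> * (\<nu> + \<epsilon> - 2 * (a t)^2 * (y t)^2 - (y t)^4 - 2 * of_real t * (y t)^2)"
      by (rule alg1[OF anz a_eq[rule_format, OF t] R e2 X4])
  qed
  show ?thesis
  proof
    fix t assume t: "t \<in> I"
    define h where "h = (\<lambda>s. - \<epsilon> * (\<nu> + \<epsilon> - 2 * (a s*a s) * (y s*y s) - (y s*y s)*(y s*y s) - 2 * of_real s * (y s*y s)))"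
    have dg: "((\<lambda>s. 2 * y s * y' s) has_vector_derivative (2 * y t * y'' t + 2 * y' t * y' t)) (at t)"
      apply (rule has_vector_derivative_eq_rhs)
       apply (rule derivative_intros dy[rule_format, OF t] ddy[rule_format, OF t])+
      by (simp add: algebra_simps)
    have dh: "(h has_vector_derivative - \<epsilon> * (- 2*(2*(a t)*(a' t)*(y t)^2 + (a t)^2*(2*(y t)*(y' t))) - 4*(y t)^3*(y' t) - 2*(y t)^2 - 2* of_real t*(2*(y t)*(y' t)))) (at t)"
      unfolding h_def
      apply (rule has_vector_derivative_eq_rhs)
       apply (rule derivative_intros dy[rule_format, OF t] da[rule_format, OF t] DERIV_ident)+
      by (simp add: power2_eq_square power3_eq_cube algebra_simps)
    have dh2: "((\<lambda>s. 2 * y s * y' s) has_vector_derivative - \<epsilon> * (- 2*(2*(a t)*(a' t)*(y t)^2 + (a t)^2*(2*(y t)*(y' t))) - 4*(y t)^3*(y' t) - 2*(y t)^2 - 2* of_real t*(2*(y t)*(y' t)))) (at t)"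
      by (rule has_vector_derivative_transform_within_open[OF dh I_open t])
         (simp add: h_def P1 power2_eq_square power4_eq_xxxx)
    have E: "2 * y' t * y' t + 2 * y t * y'' t = - \<epsilon> * (- 2*(2*(a t)*(a' t)*(y t)^2 + (a t)^2*(2*(y t)*(y' t))) - 4*(y t)^3*(y' t) - 2*(y t)^2 - 2* of_real t*(2*(y t)*(y' t)))"
      using vector_derivative_unique_at[OF dg dh2] by (simp add: algebra_simps)
    have ynz: "y t \<noteq> 0" using y_nz t by auto
    show "2 * y t * y' t = - \<epsilon> * (\<nu> + \<epsilon> - 2 * (a t)^2 * (y t)^2 - (y t)^4 - 2 * of_real t * (y t)^2)
           \<and> 4 * (y t)^3 * y'' t =
             (3 * (y t)^4 + 2 * of_real t * (y t)^2 - (\<nu> + \<epsilon>)) * ((y t)^4 + 2 * of_real t * (y t)^2 + (\<nu> + \<epsilon>))"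
      using P1[OF t] alg2[OF ynz R[OF t] e12 P1[OF t] E] by simp
  qed
qed

end
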